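(* Let $n$ and $m$ be integers with $n\geq 5$ and $m\geq 5$. For each $G\in T_{n,m}$ whose terminals are not true twins, there exists $H\in T_{n,m}$ whose terminals are true twins and which is $3$-stronger than $G$.
   Context: All graphs are finite, simple and undirected. A two-terminal graph is a graph $G$ together with two distinguished vertices $s,t$ (the terminals). $T_{n,m}$ denotes the set of all pairwise nonisomorphic (with isomorphisms preserving the set of terminals) two-terminal graphs with $n$ vertices and $m$ edges. Two vertices $u,v$ are true twins if their closed neighborhoods coincide, $N[u]=N[v]$ (in particular they are adjacent). For a positive integer $d$, a $d$-pathset of a two-terminal graph $G$ is a spanning subgraph of $G$ containing a path of length (number of edges) at most $d$ joining $s$ and $t$; $N_i^d(G)$ is the number of $d$-pathsets of $G$ with exactly $i$ edges. For $G,H\in T_{n,m}$, $H$ is $d$-stronger than $G$ if $N_i^d(H)\geq N_i^d(G)$ for every $i\in\{1,\ldots,m\}$ and $N_j^d(H)>N_j^d(G)$ for some $j\in\{1,\ldots,m\}$. *)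

theory Defs
  imports Main
begin

text \<open>A two-terminal graph with n vertices: vertex set {..<n} (labelled; all notions
below are isomorphism invariant), edge set E of 2-element subsets, terminals s, t.\<close>

definition two_terminal_graph :: "nat \<Rightarrow> nat \<Rightarrow> nat set set \<Rightarrow> nat \<Rightarrow> nat \<Rightarrow> bool" where
  "two_terminal_graph n m E s t \<longleftrightarrow>
     (\<forall>e\<in>E. \<exists>u v. e = {u, v} \<and> u \<noteq> v \<and> u < n \<and> v < n) \<and>
     card E = m \<and> s < n \<and> t < n \<and> s \<noteq> t"

definition closed_nbhd :: "nat set set \<Rightarrow> nat \<Rightarrow> nat set" where
  "closed_nbhd E u = {v. v = u \<or> {u, v} \<in> E}"

definition true_twins :: "nat set set \<Rightarrow> nat \<Rightarrow> nat \<Rightarrow> bool" where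
  "true_twins E u v \<longleftrightarrow> closed_nbhd E u = closed_nbhd E v"

text \<open>A path in edge set F from s to t, given as its list of distinct vertices;
its length is the number of edges, length p - 1.\<close>
definition is_path :: "nat set set \<Rightarrow> nat \<Rightarrow> nat \<Rightarrow> nat list \<Rightarrow> bool" where
  "is_path F s t p \<longleftrightarrow> p \<noteq> [] \<and> hd p = s \<and> last p = t \<and> distinct p \<and>
     (\<forall>i. Suc i < length p \<longrightarrow> {p ! i, p ! Suc i} \<in> F)"

definition d_pathset :: "nat \<Rightarrow> nat set set \<Rightarrow> nat \<Rightarrow> nat \<Rightarrow> nat set set \<Rightarrow> bool" where
  "d_pathset d E s t F \<longleftrightarrow> F \<subseteq> E \<and> (\<exists>p. is_path F s t p \<and> length p - 1 \<le> d)"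

definition N_count :: "nat \<Rightarrow> nat \<Rightarrow> nat set set \<Rightarrow> nat \<Rightarrow> nat \<Rightarrow> nat" where
  "N_count d i E s t = card {F. d_pathset d E s t F \<and> card F = i}"

definition d_stronger :: "nat \<Rightarrow> nat \<Rightarrow> nat set set \<Rightarrow> nat \<Rightarrow> nat \<Rightarrow> nat set set \<Rightarrow> nat \<Rightarrow> nat \<Rightarrow> bool" where
  "d_stronger d m EH sH tH EG sG tG \<longleftrightarrow>
     (\<forall>i\<in>{1..m}. N_count d i EH sH tH \<ge> N_count d i EG sG tG) \<and>
     (\<exists>j\<in>{1..m}. N_count d j EH sH tH > N_count d j EG sG tG)"

end

theory Submission
  imports Defs
begin


lemma swap_core:
  fixes C :: "'a set" and P :: "'a set \<Rightarrow> bool"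
  assumes fin: "finite C" and e: "e \<notin> C" and f: "f \<notin> C"
    and g: "\<And>F. F \<subseteq> C \<Longrightarrow> P (insert e F) \<Longrightarrow> g F \<subseteq> C \<and> card (g F) = card F \<and> P (insert f (g F))"
    and inj: "inj_on g {F. F \<subseteq> C \<and> P (insert e F)}"
  defines "h \<equiv> (\<lambda>F. if e \<in> F then insert f (g (F - {e})) else F)"
  shows "inj_on h {F. F \<subseteq> insert e C \<and> P F \<and> card F = i}"
    and "h ` {F. F \<subseteq> insert e C \<and> P F \<and> card F = i} \<subseteq> {F. F \<subseteq> insert f C \<and> P F \<and> card F = i}"
proof -
  have mem: "F - {e} \<in> {F. F \<subseteq> C \<and> P (insert e F)}" if "F \<subseteq> insert e C" "P F" "e \<in> F" for F
    using that by (auto simp: insert_absorb)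
  show "inj_on h {F. F \<subseteq> insert e C \<and> P F \<and> card F = i}"
  proof (rule inj_onI)
    fix F1 F2 assume F1: "F1 \<in> {F. F \<subseteq> insert e C \<and> P F \<and> card F = i}"
      and F2: "F2 \<in> {F. F \<subseteq> insert e C \<and> P F \<and> card F = i}" and eq: "h F1 = h F2"
    show "F1 = F2"
    proof (cases "e \<in> F1")
      case True
      note m1 = mem[OF _ _ True] 
      have gs1: "g (F1 - {e}) \<subseteq> C" using g[of "F1 - {e}"] m1 F1 by auto
      show ?thesis
      proof (cases "e \<in> F2")
        case True2: True
        have gs2: "g (F2 - {e}) \<subseteq> C" using g[of "F2 - {e}"] mem[OF _ _ True2] F2 by auto
        have "insert f (g (F1 - {e})) = insert f (g (F2 - {e}))" using eq True True2 by (simp add: h_def)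
        hence "g (F1 - {e}) = g (F2 - {e})" using gs1 gs2 f
          by (metis insert_ident subset_iff)
        hence "F1 - {e} = F2 - {e}" using inj m1 mem[OF _ _ True2] F1 F2
          by (simp add: inj_on_def)
        thus ?thesis using True True2 by blast
      next
        case False
        have "f \<in> h F1" using True by (simp add: h_def)
        moreover have "h F2 = F2" using False by (simp add: h_def)
        moreover have "f \<notin> F2" using F2 False f by auto
        ultimately show ?thesis using eq by simp
      qed
    next
      case False
      show ?thesis
      proof (cases "e \<in> F2")
        case True2: True
        have "f \<in> h F2" using True2 by (simp add: h_def)
        moreover have "h F1 = F1" using False by (simp add: h_def)
        moreover have "f \<notin> F1" using F1 False f by auto
        ultimately show ?thesis using eq by simp
      next
        case False2: False
        then show ?thesis using eq False by (simp add: h_def)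
      qed
    qed
  qed
  show "h ` {F. F \<subseteq> insert e C \<and> P F \<and> card F = i} \<subseteq> {F. F \<subseteq> insert f C \<and> P F \<and> card F = i}"
  proof
    fix X assume "X \<in> h ` {F. F \<subseteq> insert e C \<and> P F \<and> card F = i}"
    then obtain F where F: "F \<subseteq> insert e C" "P F" "card F = i" and X: "X = h F" by auto
    show "X \<in> {F. F \<subseteq> insert f C \<and> P F \<and> card F = i}"
    proof (cases "e \<in> F")
      case True
      have gg: "g (F - {e}) \<subseteq> C \<and> card (g (F - {e})) = card (F - {e}) \<and> P (insert f (g (F - {e})))"
        using g mem[OF F(1,2) True] by auto
      have finF: "finite F" using F(1) fin finite_subset by blast
      have fg: "finite (g (F - {e}))" using gg fin finite_subset by blast
      have fn: "f \<notin> g (F - {e})" using gg f by blast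
      have "card X = Suc (card (g (F - {e})))" using X True fg fn by (simp add: h_def)
      also have "\<dots> = card F" proof -
        have "card F > 0" using True finF card_gt_0_iff by blast
        thus ?thesis using gg True finF by (simp add: card_Diff_singleton)
      qed
      finally show ?thesis using X True gg F by (auto simp: h_def)
    next
      case False
      thus ?thesis using X F by (auto simp: h_def)
    qed
  qed
qed

lemma swap_le:
  fixes C :: "'a set" and P :: "'a set \<Rightarrow> bool"
  assumes fin: "finite C" and e: "e \<notin> C" and f: "f \<notin> C"
    and g: "\<And>F. F \<subseteq> C \<Longrightarrow> P (insert e F) \<Longrightarrow> g F \<subseteq> C \<and> card (g F) = card F \<and> P (insert f (g F))"
    and inj: "inj_on g {F. F \<subseteq> C \<and> P (insert e F)}"
  shows "card {F. F \<subseteq> insert e C \<and> P F \<and> card F = i} \<le> card {F. F \<subseteq> insert f C \<and> P F \<and> card F = i}"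
proof -
  let ?h = "(\<lambda>F. if e \<in> F then insert f (g (F - {e})) else F)"
  have fin2: "finite {F. F \<subseteq> insert f C \<and> P F \<and> card F = i}" using fin by auto
  show ?thesis using card_inj_on_le[OF swap_core(1)[OF assms] swap_core(2)[OF assms] fin2] by simp
qed

lemma swap_lt:
  fixes C :: "'a set" and P :: "'a set \<Rightarrow> bool"
  assumes fin: "finite C" and e: "e \<notin> C" and f: "f \<notin> C"
    and g: "\<And>F. F \<subseteq> C \<Longrightarrow> P (insert e F) \<Longrightarrow> g F \<subseteq> C \<and> card (g F) = card F \<and> P (insert f (g F))"
    and inj: "inj_on g {F. F \<subseteq> C \<and> P (insert e F)}"
    and F0: "F0 \<subseteq> C" "P (insert f F0)" "F0 \<notin> g ` {F. F \<subseteq> C \<and> P (insert e F)}"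
  shows "card {F. F \<subseteq> insert e C \<and> P F \<and> card F = Suc (card F0)} < card {F. F \<subseteq> insert f C \<and> P F \<and> card F = Suc (card F0)}"
proof -
  let ?i = "Suc (card F0)"
  let ?h = "(\<lambda>F. if e \<in> F then insert f (g (F - {e})) else F)"
  let ?S = "{F. F \<subseteq> insert e C \<and> P F \<and> card F = ?i}"
  let ?T = "{F. F \<subseteq> insert f C \<and> P F \<and> card F = ?i}"
  have fin2: "finite ?T" using fin by auto
  have sub: "?h ` ?S \<subseteq> ?T" by (rule swap_core(2)[OF assms(1-5)])
  have injh: "inj_on ?h ?S" by (rule swap_core(1)[OF assms(1-5)])
  have finF0: "finite F0" using F0(1) fin finite_subset by blast
  have "f \<notin> F0" using F0(1) f by blast
  hence XT: "insert f F0 \<in> ?T" using F0 f finF0 by auto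
  have XS: "insert f F0 \<notin> ?h ` ?S"
  proof
    assume "insert f F0 \<in> ?h ` ?S"
    then obtain F where F: "F \<in> ?S" and X: "insert f F0 = ?h F" by blast
    show False
    proof (cases "e \<in> F")
      case True
      have gg: "g (F - {e}) \<subseteq> C" using g[of "F - {e}"] F True by (auto simp: insert_absorb)
      have "insert f F0 = insert f (g (F - {e}))" using X True by simp
      hence "F0 = g (F - {e})" using gg F0(1) f by (metis insert_ident subset_iff)
      moreover have "F - {e} \<in> {F. F \<subseteq> C \<and> P (insert e F)}" using F True by (auto simp: insert_absorb)
      ultimately show False using F0(3) by blast
    next
      case False
      hence "insert f F0 = F" using X by simp
      thus False using F False f by auto
    qed
  qed
  have "?h ` ?S \<subset> ?T" using sub XT XS by blast
  hence "card (?h ` ?S) < card ?T" using fin2 by (simp add: psubset_card_mono)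
  thus ?thesis using card_image[OF injh] by simp
qed



definition P3 :: "nat \<Rightarrow> nat \<Rightarrow> nat set set \<Rightarrow> bool" where
  "P3 s t F \<longleftrightarrow> {s,t} \<in> F \<or> (\<exists>a. a \<noteq> s \<and> a \<noteq> t \<and> {s,a} \<in> F \<and> {a,t} \<in> F) \<or>
     (\<exists>a b. a \<noteq> s \<and> a \<noteq> t \<and> b \<noteq> s \<and> b \<noteq> t \<and> a \<noteq> b \<and> {s,a} \<in> F \<and> {a,b} \<in> F \<and> {b,t} \<in> F)"

lemma P3_mono: "F \<subseteq> F' \<Longrightarrow> P3 s t F \<Longrightarrow> P3 s t F'"
  unfolding P3_def by blast

lemma P3_sym1: "P3 s t F \<Longrightarrow> P3 t s F"
proof -
  assume "P3 s t F"
  then consider (a) "{s,t} \<in> F" | (b) a where "a \<noteq> s" "a \<noteq> t" "{s,a} \<in> F" "{a,t} \<in> F"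
    | (c) a b where "a \<noteq> s" "a \<noteq> t" "b \<noteq> s" "b \<noteq> t" "a \<noteq> b" "{s,a} \<in> F" "{a,b} \<in> F" "{b,t} \<in> F"
    unfolding P3_def by blast
  then show "P3 t s F"
  proof cases
    case a
    then have "{t,s} \<in> F" by (simp add: insert_commute)
    then show ?thesis unfolding P3_def by blast
  next
    case b
    then have "{t,a} \<in> F" "{a,s} \<in> F" by (simp_all add: insert_commute)
    then show ?thesis using b unfolding P3_def by blast
  next
    case c
    then have "{t,b} \<in> F" "{b,a} \<in> F" "{a,s} \<in> F" by (simp_all add: insert_commute)
    then show ?thesis using c unfolding P3_def by blast
  qed
qed

lemma P3_sym: "P3 s t F \<longleftrightarrow> P3 t s F"
  using P3_sym1 by blast

lemma path_P3:
  assumes "s \<noteq> t"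
  shows "(\<exists>p. is_path F s t p \<and> length p - 1 \<le> 3) \<longleftrightarrow> P3 s t F"
proof
  assume "\<exists>p. is_path F s t p \<and> length p - 1 \<le> 3"
  then obtain p where p: "is_path F s t p" "length p - 1 \<le> 3" by blast
  have ne: "p \<noteq> []" and hd: "hd p = s" and la: "last p = t" and di: "distinct p"
    and ed: "\<And>i. Suc i < length p \<Longrightarrow> {p ! i, p ! Suc i} \<in> F"
    using p(1) unfolding is_path_def by auto
  have "length p \<le> 4" using p(2) by simp
  moreover have "length p \<ge> 1" using ne by (cases p) auto
  ultimately have "length p = 1 \<or> length p = 2 \<or> length p = 3 \<or> length p = 4" by linarith
  then consider (l1) "length p = 1" | (l2) "length p = 2" | (l3) "length p = 3" | (l4) "length p = 4"
    by blast
  then show "P3 s t F"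
  proof cases
    case l1
    then obtain x where "p = [x]" by (metis length_0_conv length_Suc_conv One_nat_def)
    then show ?thesis using hd la assms by simp
  next
    case l2
    then obtain x y where "p = [x,y]" by (auto simp: length_Suc_conv numeral_2_eq_2)
    then show ?thesis using hd la ed[of 0] by (simp add: P3_def)
  next
    case l3
    then obtain x y z where pp: "p = [x,y,z]" by (auto simp: length_Suc_conv numeral_3_eq_3)
    then show ?thesis using hd la di ed[of 0] ed[of 1] unfolding P3_def by auto
  next
    case l4
    then obtain x y z u where pp: "p = [x,y,z,u]" by (auto simp: length_Suc_conv eval_nat_numeral)
    then show ?thesis using hd la di ed[of 0] ed[of 1] ed[of 2] unfolding P3_def
      by (auto simp: eval_nat_numeral)
  qed
next
  assume "P3 s t F"
  then consider (a) "{s,t} \<in> F" | (b) a where "a \<noteq> s" "a \<noteq> t" "{s,a} \<in> F" "{a,t} \<in> F"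
    | (c) a b where "a \<noteq> s" "a \<noteq> t" "b \<noteq> s" "b \<noteq> t" "a \<noteq> b" "{s,a} \<in> F" "{a,b} \<in> F" "{b,t} \<in> F"
    unfolding P3_def by blast
  then show "\<exists>p. is_path F s t p \<and> length p - 1 \<le> 3"
  proof cases
    case a
    have "is_path F s t [s,t]" using a assms unfolding is_path_def by (auto simp: less_Suc_eq)
    thus ?thesis by force
  next
    case b
    have "is_path F s t [s,a,t]" using b assms unfolding is_path_def
      by (auto simp: less_Suc_eq nth_Cons split: nat.splits)
    thus ?thesis by force
  next
    case c
    have "is_path F s t [s,a,b,t]" using c assms unfolding is_path_def
      by (auto simp: less_Suc_eq nth_Cons split: nat.splits)
    thus ?thesis by force
  qed
qed

lemma N_eq:
  assumes "s \<noteq> t"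
  shows "N_count 3 i E s t = card {F. F \<subseteq> E \<and> P3 s t F \<and> card F = i}"
  unfolding N_count_def d_pathset_def using path_P3[OF assms] by simp

lemma N_sym:
  assumes "s \<noteq> t"
  shows "N_count 3 i E s t = N_count 3 i E t s"
  using N_eq[OF assms] N_eq[of t s] assms P3_sym by simp

lemma twins_iff:
  assumes "s \<noteq> t"
  shows "true_twins E s t \<longleftrightarrow> {s,t} \<in> E \<and> (\<forall>v. v \<noteq> s \<longrightarrow> v \<noteq> t \<longrightarrow> ({s,v} \<in> E \<longleftrightarrow> {t,v} \<in> E))"
proof
  assume tw: "true_twins E s t"
  hence eq: "\<And>v. (v = s \<or> {s,v} \<in> E) \<longleftrightarrow> (v = t \<or> {t,v} \<in> E)"
    unfolding true_twins_def closed_nbhd_def by (simp add: set_eq_iff)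
  have "{s,t} \<in> E" using eq[of s] assms by (simp add: insert_commute)
  moreover have "\<forall>v. v \<noteq> s \<longrightarrow> v \<noteq> t \<longrightarrow> ({s,v} \<in> E \<longleftrightarrow> {t,v} \<in> E)" using eq by blast
  ultimately show "{s,t} \<in> E \<and> (\<forall>v. v \<noteq> s \<longrightarrow> v \<noteq> t \<longrightarrow> ({s,v} \<in> E \<longleftrightarrow> {t,v} \<in> E))" ..
next
  assume h: "{s,t} \<in> E \<and> (\<forall>v. v \<noteq> s \<longrightarrow> v \<noteq> t \<longrightarrow> ({s,v} \<in> E \<longleftrightarrow> {t,v} \<in> E))"
  have "\<And>v. (v = s \<or> {s,v} \<in> E) \<longleftrightarrow> (v = t \<or> {t,v} \<in> E)"
    using h by (metis insert_commute)
  thus "true_twins E s t" unfolding true_twins_def closed_nbhd_def by (simp add: set_eq_iff)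
qed



lemma tt_edge:
  assumes "two_terminal_graph n m E s t" "{a,b} \<in> E"
  shows "a < n \<and> b < n \<and> a \<noteq> b"
proof -
  obtain u v where "{a,b} = {u,v}" "u \<noteq> v" "u < n" "v < n"
    using assms unfolding two_terminal_graph_def by blast
  thus ?thesis by (auto simp: doubleton_eq_iff)
qed

lemma tt_fin:
  assumes "two_terminal_graph n m E s t" "m \<ge> 1"
  shows "finite E"
  using assms unfolding two_terminal_graph_def by (metis card.infinite not_one_le_zero)

lemma tt_sym: "two_terminal_graph n m E s t \<Longrightarrow> two_terminal_graph n m E t s"
  unfolding two_terminal_graph_def by auto

lemma tt_swap:
  assumes "two_terminal_graph n m E s t" "m \<ge> 1" "e \<in> E" "{u,v} \<notin> E" "u \<noteq> v" "u < n" "v < n"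
  shows "two_terminal_graph n m (insert {u,v} (E - {e})) s t"
proof -
  have fin: "finite E" using tt_fin assms(1,2) .
  have "card (insert {u,v} (E - {e})) = Suc (card (E - {e}))" using fin assms(4) by simp
  also have "\<dots> = card E" proof -
    have "card E > 0" using fin assms(3) card_gt_0_iff by blast
    thus ?thesis using fin assms(3) by (simp add: card_Diff_singleton)
  qed
  finally show ?thesis using assms unfolding two_terminal_graph_def by auto
qed

lemma move_g:
  assumes tt: "two_terminal_graph n m E s t" and m: "m \<ge> 1" and e: "e \<in> E" and f: "f \<notin> E"
    and g: "\<And>F. F \<subseteq> E - {e} \<Longrightarrow> P3 s t (insert e F) \<Longrightarrow> g F \<subseteq> E - {e} \<and> card (g F) = card F \<and> P3 s t (insert f (g F))"
    and inj: "inj_on g {F. F \<subseteq> E - {e} \<and> P3 s t (insert e F)}"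
  shows "\<forall>i. N_count 3 i E s t \<le> N_count 3 i (insert f (E - {e})) s t"
proof
  fix i
  have st: "s \<noteq> t" using tt unfolding two_terminal_graph_def by auto
  have fin: "finite (E - {e})" using tt_fin[OF tt m] by simp
  have fC: "f \<notin> E - {e}" using f by simp
  have "card {F. F \<subseteq> insert e (E - {e}) \<and> P3 s t F \<and> card F = i} \<le> card {F. F \<subseteq> insert f (E - {e}) \<and> P3 s t F \<and> card F = i}"
    by (rule swap_le[OF fin _ fC g inj]) auto
  moreover have "insert e (E - {e}) = E" using e by auto
  ultimately show "N_count 3 i E s t \<le> N_count 3 i (insert f (E - {e})) s t"
    using N_eq[OF st] by simp
qed

lemma move_g_lt:
  assumes tt: "two_terminal_graph n m E s t" and m: "m \<ge> 1" and e: "e \<in> E" and f: "f \<notin> E"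
    and g: "\<And>F. F \<subseteq> E - {e} \<Longrightarrow> P3 s t (insert e F) \<Longrightarrow> g F \<subseteq> E - {e} \<and> card (g F) = card F \<and> P3 s t (insert f (g F))"
    and inj: "inj_on g {F. F \<subseteq> E - {e} \<and> P3 s t (insert e F)}"
    and F0: "F0 \<subseteq> E - {e}" "P3 s t (insert f F0)" "F0 \<notin> g ` {F. F \<subseteq> E - {e} \<and> P3 s t (insert e F)}"
  shows "\<exists>j\<in>{1..m}. N_count 3 j E s t < N_count 3 j (insert f (E - {e})) s t"
proof
  have st: "s \<noteq> t" using tt unfolding two_terminal_graph_def by auto
  have finE: "finite E" using tt_fin[OF tt m] .
  have fin: "finite (E - {e})" using finE by simp
  have fC: "f \<notin> E - {e}" using f by simp
  have "card {F. F \<subseteq> insert e (E - {e}) \<and> P3 s t F \<and> card F = Suc (card F0)} < card {F. F \<subseteq> insert f (E - {e}) \<and> P3 s t F \<and> card F = Suc (card F0)}"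
    by (rule swap_lt[OF fin _ fC g inj F0]) auto
  moreover have "insert e (E - {e}) = E" using e by auto
  ultimately show "N_count 3 (Suc (card F0)) E s t < N_count 3 (Suc (card F0)) (insert f (E - {e})) s t"
    using N_eq[OF st] by simp
  have "card F0 < card E" proof -
    have "F0 \<subset> E" using F0(1) e by blast
    thus ?thesis using finE by (simp add: psubset_card_mono)
  qed
  thus "Suc (card F0) \<in> {1..m}" using tt unfolding two_terminal_graph_def by auto
qed

lemma move_id:
  assumes tt: "two_terminal_graph n m E s t" and m: "m \<ge> 1" and e: "e \<in> E" and f: "f \<notin> E"
    and g: "\<And>F. F \<subseteq> E - {e} \<Longrightarrow> P3 s t (insert e F) \<Longrightarrow> P3 s t (insert f F)"
  shows "\<forall>i. N_count 3 i E s t \<le> N_count 3 i (insert f (E - {e})) s t"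
  by (rule move_g[where g = id, OF tt m e f]) (auto simp: g)

lemma move_id_lt:
  assumes tt: "two_terminal_graph n m E s t" and m: "m \<ge> 1" and e: "e \<in> E" and f: "f \<notin> E"
    and g: "\<And>F. F \<subseteq> E - {e} \<Longrightarrow> P3 s t (insert e F) \<Longrightarrow> P3 s t (insert f F)"
    and F0: "F0 \<subseteq> E - {e}" "P3 s t (insert f F0)" "\<not> P3 s t (insert e F0)"
  shows "\<exists>j\<in>{1..m}. N_count 3 j E s t < N_count 3 j (insert f (E - {e})) s t"
  by (rule move_g_lt[where g = id, OF tt m e f _ _ F0(1,2)]) (use g F0 in auto)



lemma irr_sw:
  assumes "w \<noteq> s" "w \<noteq> t" "s \<noteq> t" "{t,w} \<notin> F" "\<forall>b. b \<noteq> s \<longrightarrow> b \<noteq> t \<longrightarrow> b \<noteq> w \<longrightarrow> {w,b} \<notin> F"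
    and "P3 s t (insert {s,w} F)"
  shows "P3 s t F"
  using assms unfolding P3_def by (auto simp: doubleton_eq_iff insert_commute)

lemma irr_int:
  assumes "x \<noteq> s" "x \<noteq> t" "y \<noteq> s" "y \<noteq> t" "{s,x} \<notin> F" "{t,x} \<notin> F"
    and "P3 s t (insert {x,y} F)"
  shows "P3 s t F"
  using assms unfolding P3_def by (auto simp: doubleton_eq_iff insert_commute)

lemma R1_path:
  assumes "w \<noteq> s" "w \<noteq> t" "b \<noteq> s" "b \<noteq> t" "w \<noteq> b" "s \<noteq> t" "{t,w} \<notin> F"
    and "P3 s t (insert {w,b} F)"
  shows "P3 s t (insert {w,t} F)"
  using assms unfolding P3_def by (auto simp: doubleton_eq_iff insert_commute)

lemma L_path:
  assumes "k1 \<noteq> s" "k1 \<noteq> t" "k2 \<noteq> s" "k2 \<noteq> t" "k1 \<noteq> k2" "s \<noteq> t"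
    and "P3 s t (insert {k1,k2} F)" "\<not> P3 s t F"
  shows "({s,k1} \<in> F \<and> {k2,t} \<in> F) \<or> ({s,k2} \<in> F \<and> {k1,t} \<in> F)"
  using assms unfolding P3_def by (auto simp: doubleton_eq_iff insert_commute)



definition Dset :: "nat \<Rightarrow> nat set set \<Rightarrow> nat \<Rightarrow> nat \<Rightarrow> nat set" where
  "Dset n E s t = {v. v < n \<and> v \<noteq> s \<and> v \<noteq> t \<and> \<not> ({s,v} \<in> E \<longleftrightarrow> {t,v} \<in> E)}"

lemma Dset_sym: "Dset n E s t = Dset n E t s"
  unfolding Dset_def by blast

lemma Dset_fin: "finite (Dset n E s t)"
  unfolding Dset_def by simp

lemma twins_D:
  assumes tt: "two_terminal_graph n m E s t" and st: "{s,t} \<in> E"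
  shows "true_twins E s t \<longleftrightarrow> Dset n E s t = {}"
proof -
  have sn: "s \<noteq> t" using tt unfolding two_terminal_graph_def by auto
  have big: "\<And>v. \<not> v < n \<Longrightarrow> {s,v} \<notin> E \<and> {t,v} \<notin> E" using tt_edge[OF tt] by blast
  show ?thesis unfolding twins_iff[OF sn] Dset_def using st big by blast
qed

lemma Rstep:
  assumes tt: "two_terminal_graph n m E s t" and n: "n \<ge> 5" and m: "m \<ge> 1"
    and st: "{s,t} \<in> E" and sw: "{s,w} \<in> E" and tw: "{t,w} \<notin> E" and ws: "w \<noteq> s" and wt: "w \<noteq> t"
  shows "\<exists>E'. two_terminal_graph n m E' s t \<and> {s,t} \<in> E' \<and> Dset n E' s t = Dset n E s t - {w} \<and>
           (\<forall>i. N_count 3 i E s t \<le> N_count 3 i E' s t)"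
proof -
  have sn: "s \<noteq> t" and sl: "s < n" and tl: "t < n" using tt unfolding two_terminal_graph_def by auto
  have wl: "w < n" using tt_edge[OF tt sw] by simp
  show ?thesis
  proof (cases "\<exists>b. b \<noteq> s \<and> b \<noteq> t \<and> b \<noteq> w \<and> {w,b} \<in> E")
    case True
    then obtain b where b: "b \<noteq> s" "b \<noteq> t" "b \<noteq> w" "{w,b} \<in> E" by blast
    let ?E' = "insert {w,t} (E - {{w,b}})"
    have wt': "{w,t} \<notin> E" using tw by (simp add: insert_commute)
    have tt': "two_terminal_graph n m ?E' s t"
      by (rule tt_swap[OF tt m b(4) wt' wt wl tl])
    have N: "\<forall>i. N_count 3 i E s t \<le> N_count 3 i ?E' s t"
    proof (rule move_id[OF tt m b(4) wt'])
      fix F assume F: "F \<subseteq> E - {{w,b}}" "P3 s t (insert {w,b} F)"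
      have "{t,w} \<notin> F" using F(1) tw by blast
      thus "P3 s t (insert {w,t} F)" using R1_path[OF ws wt b(1,2) b(3)[symmetric] sn _ F(2)] by simp
    qed
    have st': "{s,t} \<in> ?E'" using st b by (auto simp: doubleton_eq_iff)
    have D': "Dset n ?E' s t = Dset n E s t - {w}"
      unfolding Dset_def using ws wt b sw sn by (auto simp: doubleton_eq_iff)
    show ?thesis using tt' st' D' N by blast
  next
    case False
    have "\<exists>x. x < n \<and> x \<noteq> s \<and> x \<noteq> t \<and> x \<noteq> w"
    proof (rule ccontr)
      assume "\<not> ?thesis"
      hence a: "\<forall>x<4. x = s \<or> x = t \<or> x = w" using n by auto
      have "(0::nat) = s \<or> 0 = t \<or> 0 = w" using a[rule_format, of 0] by simp
      moreover have "(1::nat) = s \<or> 1 = t \<or> 1 = w" using a[rule_format, of 1] by simp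
      moreover have "(2::nat) = s \<or> 2 = t \<or> 2 = w" using a[rule_format, of 2] by simp
      moreover have "(3::nat) = s \<or> 3 = t \<or> 3 = w" using a[rule_format, of 3] by simp
      ultimately show False by auto
    qed
    then obtain x where x: "x < n" "x \<noteq> s" "x \<noteq> t" "x \<noteq> w" by blast
    let ?E' = "insert {w,x} (E - {{s,w}})"
    have wx: "{w,x} \<notin> E" using False x by blast
    have tt': "two_terminal_graph n m ?E' s t"
      by (rule tt_swap[OF tt m sw wx x(4)[symmetric] wl x(1)])
    have N: "\<forall>i. N_count 3 i E s t \<le> N_count 3 i ?E' s t"
    proof (rule move_id[OF tt m sw wx])
      fix F assume F: "F \<subseteq> E - {{s,w}}" "P3 s t (insert {s,w} F)"
      have "P3 s t F" by (rule irr_sw[OF ws wt sn _ _ F(2)]) (use F(1) tw False in auto)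
      thus "P3 s t (insert {w,x} F)" by (rule P3_mono[rotated]) auto
    qed
    have st': "{s,t} \<in> ?E'" using st ws wt by (auto simp: doubleton_eq_iff)
    have D': "Dset n ?E' s t = Dset n E s t - {w}"
      unfolding Dset_def using ws wt x sw tw sn by (auto simp: doubleton_eq_iff)
    show ?thesis using tt' st' D' N by blast
  qed
qed

lemma Rmain:
  assumes n: "n \<ge> 5" and m: "m \<ge> 1"
  shows "two_terminal_graph n m E s t \<Longrightarrow> {s,t} \<in> E \<Longrightarrow> card (Dset n E s t) = k \<Longrightarrow>
    \<exists>E' s' t'. two_terminal_graph n m E' s' t' \<and> true_twins E' s' t' \<and> (\<forall>i. N_count 3 i E s t \<le> N_count 3 i E' s' t')"
proof (induction k arbitrary: E s t)
  case 0
  have "Dset n E s t = {}" using 0 Dset_fin card_0_eq by blast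
  hence "true_twins E s t" using twins_D 0 by blast
  thus ?case using 0 by blast
next
  case (Suc k)
  have sn: "s \<noteq> t" using Suc.prems unfolding two_terminal_graph_def by auto
  obtain w where w: "w \<in> Dset n E s t" using Suc.prems(3) by (cases "Dset n E s t = {}") auto
  have ws: "w \<noteq> s" and wt: "w \<noteq> t" and x: "\<not> ({s,w} \<in> E \<longleftrightarrow> {t,w} \<in> E)" using w unfolding Dset_def by auto
  have cD: "card (Dset n E s t - {w}) = k" using Suc.prems(3) w Dset_fin by simp
  show ?case
  proof (cases "{s,w} \<in> E")
    case True
    hence tw: "{t,w} \<notin> E" using x by blast
    obtain E' where E': "two_terminal_graph n m E' s t" "{s,t} \<in> E'" "Dset n E' s t = Dset n E s t - {w}"
      "\<forall>i. N_count 3 i E s t \<le> N_count 3 i E' s t"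
      using Rstep[OF Suc.prems(1) n m Suc.prems(2) True tw ws wt] by blast
    obtain E'' s'' t'' where R: "two_terminal_graph n m E'' s'' t''" "true_twins E'' s'' t''"
      "\<forall>i. N_count 3 i E' s t \<le> N_count 3 i E'' s'' t''"
    proof -
      have "card (Dset n E' s t) = k" using E'(3) cD by simp
      thus ?thesis using Suc.IH[OF E'(1,2)] that by blast
    qed
    have "\<forall>i. N_count 3 i E s t \<le> N_count 3 i E'' s'' t''"
    proof
      fix i
      have a: "N_count 3 i E s t \<le> N_count 3 i E' s t" using E'(4) by (rule spec)
      have b: "N_count 3 i E' s t \<le> N_count 3 i E'' s'' t''" using R(3) by (rule spec)
      show "N_count 3 i E s t \<le> N_count 3 i E'' s'' t''" using a b by linarith
    qed
    thus ?thesis using R(1,2) by blast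
  next
    case False
    hence tw: "{t,w} \<in> E" using x by blast
    have tt2: "two_terminal_graph n m E t s" using tt_sym[OF Suc.prems(1)] .
    have st2: "{t,s} \<in> E" using Suc.prems(2) by (simp add: insert_commute)
    obtain E' where E': "two_terminal_graph n m E' t s" "{t,s} \<in> E'" "Dset n E' t s = Dset n E t s - {w}"
      "\<forall>i. N_count 3 i E t s \<le> N_count 3 i E' t s"
      using Rstep[OF tt2 n m st2 tw False wt ws] by blast
    have E'1: "two_terminal_graph n m E' s t" using tt_sym[OF E'(1)] .
    have E'2: "{s,t} \<in> E'" using E'(2) by (simp add: insert_commute)
    have E'3: "card (Dset n E' s t) = k" using E'(3) cD Dset_sym[of n E' s t] Dset_sym[of n E s t] by simp
    obtain E'' s'' t'' where R: "two_terminal_graph n m E'' s'' t''" "true_twins E'' s'' t''"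
      "\<forall>i. N_count 3 i E' s t \<le> N_count 3 i E'' s'' t''"
      using Suc.IH[OF E'1 E'2 E'3] by auto
    have "\<forall>i. N_count 3 i E s t \<le> N_count 3 i E' s t" using E'(4) N_sym[OF sn] by simp
    hence "\<forall>i. N_count 3 i E s t \<le> N_count 3 i E'' s'' t''" using R(3) using order_trans by fast
    thus ?thesis using R(1,2) by blast
  qed
qed



lemma P3_I2: "a \<noteq> s \<Longrightarrow> a \<noteq> t \<Longrightarrow> {s,a} \<in> F \<Longrightarrow> {a,t} \<in> F \<Longrightarrow> P3 s t F"
  unfolding P3_def by blast

lemma special_move:
  assumes tt: "two_terminal_graph n m E s t" and m: "m \<ge> 1" and st: "s \<noteq> t"
    and k: "k1 \<noteq> k2" "k1 \<noteq> s" "k1 \<noteq> t" "k2 \<noteq> s" "k2 \<noteq> t"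
    and w: "w \<noteq> s" "w \<noteq> t" "w \<noteq> k1" "w \<noteq> k2"
    and kk: "{k1,k2} \<in> E" and sw: "{s,w} \<in> E" and tw: "{t,w} \<notin> E"
    and noint: "\<forall>b. b \<noteq> s \<longrightarrow> b \<noteq> t \<longrightarrow> b \<noteq> w \<longrightarrow> {w,b} \<notin> E"
  shows "(\<forall>i. N_count 3 i E s t \<le> N_count 3 i (insert {t,w} (E - {{k1,k2}})) s t) \<and>
         (\<exists>j\<in>{1..m}. N_count 3 j E s t < N_count 3 j (insert {t,w} (E - {{k1,k2}})) s t)"
proof -
  let ?C = "E - {{k1,k2}}"
  let ?P = "P3 s t"
  define g where "g F = (if ?P F \<or> {s,w} \<in> F then F
      else if {s,k1} \<in> F \<and> {k2,t} \<in> F then insert {s,w} (F - {{s,k1}})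
      else insert {s,w} (F - {{s,k2}}))" for F
  have finE: "finite E" using tt_fin[OF tt m] .
  have gI: "g F = F" if "?P F \<or> {s,w} \<in> F" for F
    unfolding g_def by (rule if_P[OF that])
  have gII: "g F = insert {s,w} (F - {{s,k1}})" if "\<not> (?P F \<or> {s,w} \<in> F)" "{s,k1} \<in> F \<and> {k2,t} \<in> F" for F
    unfolding g_def by (rule trans[OF if_not_P[OF that(1)] if_P[OF that(2)]])
  have gIII: "g F = insert {s,w} (F - {{s,k2}})" if "\<not> (?P F \<or> {s,w} \<in> F)" "\<not> ({s,k1} \<in> F \<and> {k2,t} \<in> F)" for F
    unfolding g_def by (rule trans[OF if_not_P[OF that(1)] if_not_P[OF that(2)]])
  have irr: "\<And>X. X \<subseteq> E \<Longrightarrow> ?P (insert {s,w} X) \<Longrightarrow> ?P X"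
  proof -
    fix X assume X: "X \<subseteq> E" "?P (insert {s,w} X)"
    show "?P X" by (rule irr_sw[OF w(1,2) st _ _ X(2)]) (use X(1) tw noint in auto)
  qed
  have L: "\<And>F. ?P (insert {k1,k2} F) \<Longrightarrow> \<not> ?P F \<Longrightarrow> ({s,k1} \<in> F \<and> {k2,t} \<in> F) \<or> ({s,k2} \<in> F \<and> {k1,t} \<in> F)"
    using L_path[OF k(2,3,4,5,1) st] by blast
  have swC: "{s,w} \<in> ?C" using sw k by (auto simp: doubleton_eq_iff)
  have ne1: "{s,w} \<noteq> {s,k1}" "{s,w} \<noteq> {s,k2}" "{k2,t} \<noteq> {s,k1}" "{k1,t} \<noteq> {s,k2}"
    "{k2,t} \<noteq> {s,w}" "{k1,t} \<noteq> {s,w}" "{k1,t} \<noteq> {s,k1}" "{k2,t} \<noteq> {s,k2}"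
    using k w st by (auto simp: doubleton_eq_iff)
  have P1: "?P F" if "{s,k1} \<in> F" "{k1,t} \<in> F" for F
    using that k unfolding P3_def by blast
  have P2: "?P F" if "{s,k2} \<in> F" "{k2,t} \<in> F" for F
    using that k unfolding P3_def by blast
  have gprop: "g F \<subseteq> ?C \<and> card (g F) = card F \<and> ?P (insert {t,w} (g F))"
    if F: "F \<subseteq> ?C" "?P (insert {k1,k2} F)" for F
  proof (cases "?P F \<or> {s,w} \<in> F")
    case True
    have "?P (insert {t,w} F)"
    proof (cases "?P F")
      case True thus ?thesis by (rule P3_mono[rotated]) auto
    next
      case False
      hence "{s,w} \<in> F" using \<open>?P F \<or> {s,w} \<in> F\<close> by blast
      have "{w,t} \<in> insert {t,w} F" by (simp add: insert_commute)
      show ?thesis by (rule P3_I2[OF w(1,2)]) (use \<open>{s,w} \<in> F\<close> \<open>{w,t} \<in> insert {t,w} F\<close> in simp_all)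
    qed
    thus ?thesis using F(1) unfolding gI[OF True] by simp
  next
    case False
    have finF: "finite F" using F(1) finE by (meson finite_Diff finite_subset)
    have Pw: "?P (insert {t,w} (insert {s,w} X))" for X
      using P3_I2[OF w(1,2), of "insert {t,w} (insert {s,w} X)"] by (simp add: insert_commute)
    show ?thesis
    proof (cases "{s,k1} \<in> F \<and> {k2,t} \<in> F")
      case True
      have "g F = insert {s,w} (F - {{s,k1}})" by (rule gII[OF False True])
      moreover have "card (insert {s,w} (F - {{s,k1}})) = card F"
      proof -
        have "card F > 0" using finF True card_gt_0_iff by blast
        thus ?thesis using False True finF ne1 by (simp add: card_Diff_singleton)
      qed
      ultimately show ?thesis using F(1) swC Pw by auto
    next
      case False2: False
      have h: "{s,k2} \<in> F \<and> {k1,t} \<in> F" using L[OF F(2)] False False2 by blast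
      have "g F = insert {s,w} (F - {{s,k2}})" by (rule gIII[OF False False2])
      moreover have "card (insert {s,w} (F - {{s,k2}})) = card F"
      proof -
        have "card F > 0" using finF h card_gt_0_iff by blast
        thus ?thesis using False h finF ne1 by (simp add: card_Diff_singleton)
      qed
      ultimately show ?thesis using F(1) swC Pw by auto
    qed
  qed
  define cI where "cI F \<longleftrightarrow> \<not> (\<not> ?P F \<and> {s,w} \<notin> F) \<and> g F = F" for F
  define cII where "cII F \<longleftrightarrow> \<not> ?P F \<and> {s,w} \<notin> F \<and> {s,k1} \<in> F \<and> {k2,t} \<in> F \<and> {s,k2} \<notin> F \<and> {k1,t} \<notin> F \<and> g F = insert {s,w} (F - {{s,k1}})" for F
  define cIII where "cIII F \<longleftrightarrow> \<not> ?P F \<and> {s,w} \<notin> F \<and> {s,k2} \<in> F \<and> {k1,t} \<in> F \<and> {s,k1} \<notin> F \<and> {k2,t} \<notin> F \<and> g F = insert {s,w} (F - {{s,k2}})" for F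
  have cls: "cI F \<or> cII F \<or> cIII F"
    if F: "F \<subseteq> ?C" "?P (insert {k1,k2} F)" for F
  proof (cases "?P F \<or> {s,w} \<in> F")
    case True thus ?thesis unfolding cI_def using gI[OF True] by simp
  next
    case False
    show ?thesis
    proof (cases "{s,k1} \<in> F \<and> {k2,t} \<in> F")
      case True
      hence "cII F" unfolding cII_def using False P1[of F] P2[of F] gII[OF False True] by blast
      thus ?thesis by blast
    next
      case False2: False
      have h: "{s,k2} \<in> F \<and> {k1,t} \<in> F" using L[OF F(2)] False False2 by blast
      hence "cIII F" unfolding cIII_def using False False2 P1[of F] P2[of F] gIII[OF False False2] by blast
      thus ?thesis by blast
    qed
  qed
  have notP_img: "\<not> ?P (insert {s,w} (F - {{s,k}}))" if "F \<subseteq> E" "\<not> ?P F" for F k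
  proof
    assume "?P (insert {s,w} (F - {{s,k}}))"
    hence "?P (F - {{s,k}})" using irr that(1) by blast
    hence "?P F" by (rule P3_mono[rotated]) auto
    thus False using that(2) by blast
  qed
  have noI: False if "\<not> (\<not> ?P X \<and> {s,w} \<notin> X)" "?P (insert {k1,k2} X)"
       "Y \<subseteq> E" "\<not> ?P Y" "{s,k1} \<notin> Y - {{s,k}}" "{s,k2} \<notin> Y - {{s,k}}"
       "X = insert {s,w} (Y - {{s,k}})" for X Y k
  proof -
    have nP: "\<not> ?P X" using notP_img[OF that(3,4)] that(7) by blast
    have "{s,k1} \<notin> X" "{s,k2} \<notin> X" using that(5,6,7) ne1 by auto
    thus False using L[OF that(2) nP] by blast
  qed
  have hI_II: False if "cI X" "cII Y" "X \<subseteq> E" "?P (insert {k1,k2} X)" "Y \<subseteq> E" "g X = g Y" for X Y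
  proof -
    have a: "\<not> (\<not> ?P X \<and> {s,w} \<notin> X)" "g X = X" using that(1) unfolding cI_def by auto
    have b: "\<not> ?P Y" "{s,k2} \<notin> Y" "g Y = insert {s,w} (Y - {{s,k1}})" using that(2) unfolding cII_def by auto
    show False by (rule noI[OF a(1) that(4) that(5) b(1), of k1]) (use b a that(6) in auto)
  qed
  have hI_III: False if "cI X" "cIII Y" "X \<subseteq> E" "?P (insert {k1,k2} X)" "Y \<subseteq> E" "g X = g Y" for X Y
  proof -
    have a: "\<not> (\<not> ?P X \<and> {s,w} \<notin> X)" "g X = X" using that(1) unfolding cI_def by auto
    have b: "\<not> ?P Y" "{s,k1} \<notin> Y" "g Y = insert {s,w} (Y - {{s,k2}})" using that(2) unfolding cIII_def by auto
    show False by (rule noI[OF a(1) that(4) that(5) b(1), of k2]) (use b a that(6) in auto)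
  qed
  have hII_III: False if "cII X" "cIII Y" "g X = g Y" for X Y
  proof -
    have "{k2,t} \<in> g X" using that(1) ne1 unfolding cII_def by auto
    moreover have "{k2,t} \<notin> g Y" using that(2) ne1 unfolding cIII_def by auto
    ultimately show False using that(3) by simp
  qed
  have hI_I: "X = Y" if "cI X" "cI Y" "g X = g Y" for X Y
  proof -
    have "g X = X" using that(1) unfolding cI_def by blast
    moreover have "g Y = Y" using that(2) unfolding cI_def by blast
    ultimately show ?thesis using that(3) by metis
  qed
  have hII_II: "X = Y" if "cII X" "cII Y" "g X = g Y" for X Y
  proof -
    have hx: "{s,w} \<notin> X" "{s,k1} \<in> X" "g X = insert {s,w} (X - {{s,k1}})"
      using that(1) unfolding cII_def by simp_all
    have hy: "{s,w} \<notin> Y" "{s,k1} \<in> Y" "g Y = insert {s,w} (Y - {{s,k1}})"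
      using that(2) unfolding cII_def by simp_all
    have "{s,w} \<notin> X" "{s,k1} \<in> X" "{s,w} \<notin> Y" "{s,k1} \<in> Y"
      "insert {s,w} (X - {{s,k1}}) = insert {s,w} (Y - {{s,k1}})"
      using hx hy that(3) by simp_all
    hence d: "X - {{s,k1}} = Y - {{s,k1}}" using insert_ident[of "{s,w}" "X - {{s,k1}}" "Y - {{s,k1}}"] by blast
    have "X = insert {s,k1} (X - {{s,k1}})" using \<open>{s,k1} \<in> X\<close> by (simp add: insert_absorb)
    also have "\<dots> = insert {s,k1} (Y - {{s,k1}})" using d by simp
    also have "\<dots> = Y" using \<open>{s,k1} \<in> Y\<close> by (simp add: insert_absorb)
    finally show ?thesis .
  qed
  have hIII_III: "X = Y" if "cIII X" "cIII Y" "g X = g Y" for X Y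
  proof -
    have hx: "{s,w} \<notin> X" "{s,k2} \<in> X" "g X = insert {s,w} (X - {{s,k2}})"
      using that(1) unfolding cIII_def by simp_all
    have hy: "{s,w} \<notin> Y" "{s,k2} \<in> Y" "g Y = insert {s,w} (Y - {{s,k2}})"
      using that(2) unfolding cIII_def by simp_all
    have "{s,w} \<notin> X" "{s,k2} \<in> X" "{s,w} \<notin> Y" "{s,k2} \<in> Y"
      "insert {s,w} (X - {{s,k2}}) = insert {s,w} (Y - {{s,k2}})"
      using hx hy that(3) by simp_all
    hence d: "X - {{s,k2}} = Y - {{s,k2}}" using insert_ident[of "{s,w}" "X - {{s,k2}}" "Y - {{s,k2}}"] by blast
    have "X = insert {s,k2} (X - {{s,k2}})" using \<open>{s,k2} \<in> X\<close> by (simp add: insert_absorb)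
    also have "\<dots> = insert {s,k2} (Y - {{s,k2}})" using d by simp
    also have "\<dots> = Y" using \<open>{s,k2} \<in> Y\<close> by (simp add: insert_absorb)
    finally show ?thesis .
  qed
  have inj: "inj_on g {F. F \<subseteq> ?C \<and> ?P (insert {k1,k2} F)}"
  proof (rule inj_onI)
    fix F1 F2 assume A1: "F1 \<in> {F. F \<subseteq> ?C \<and> ?P (insert {k1,k2} F)}"
      and A2: "F2 \<in> {F. F \<subseteq> ?C \<and> ?P (insert {k1,k2} F)}" and eq: "g F1 = g F2"
    have F1: "F1 \<subseteq> ?C" "?P (insert {k1,k2} F1)" and F2: "F2 \<subseteq> ?C" "?P (insert {k1,k2} F2)"
      using A1 A2 by auto
    have E1: "F1 \<subseteq> E" "F2 \<subseteq> E" using F1 F2 by auto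
    have eq': "g F2 = g F1" using eq by simp
    show "F1 = F2"
      using cls[OF F1] cls[OF F2] hI_I[OF _ _ eq] hII_II[OF _ _ eq] hIII_III[OF _ _ eq]
        hI_II[OF _ _ E1(1) F1(2) E1(2) eq] hI_III[OF _ _ E1(1) F1(2) E1(2) eq]
        hI_II[OF _ _ E1(2) F2(2) E1(1) eq'] hI_III[OF _ _ E1(2) F2(2) E1(1) eq']
        hII_III[OF _ _ eq] hII_III[OF _ _ eq']
      by blast
  qed
  have twE: "{t,w} \<notin> E" by fact
  have part1: "\<forall>i. N_count 3 i E s t \<le> N_count 3 i (insert {t,w} ?C) s t"
    by (rule move_g[OF tt m kk twE gprop inj]) auto
  have F0: "{{s,w}} \<subseteq> ?C" using swC by simp
  have F0P: "?P (insert {t,w} {{s,w}})" using P3_I2[OF w(1,2), of "insert {t,w} {{s,w}}"] by (simp add: insert_commute)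
  have F0n: "{{s,w}} \<notin> g ` {F. F \<subseteq> ?C \<and> ?P (insert {k1,k2} F)}"
  proof
    assume "{{s,w}} \<in> g ` {F. F \<subseteq> ?C \<and> ?P (insert {k1,k2} F)}"
    then obtain F where F: "F \<subseteq> ?C" "?P (insert {k1,k2} F)" and gF: "g F = {{s,w}}" by blast
    have EF: "F \<subseteq> E" using F(1) by auto
    show False using cls[OF F]
    proof (elim disjE)
      assume "cI F"
      hence "F = {{s,w}}" using gF unfolding cI_def by simp
      hence "?P {{k1,k2},{s,w}}" using F(2) by simp
      thus False using k w st unfolding P3_def by (auto simp: doubleton_eq_iff)
    next
      assume "cII F"
      hence "{k2,t} \<in> g F" using ne1 unfolding cII_def by auto
      thus False using gF ne1 by auto
    next
      assume "cIII F"
      hence "{k1,t} \<in> g F" using ne1 unfolding cIII_def by auto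
      thus False using gF ne1 by auto
    qed
  qed
  have part2: "\<exists>j\<in>{1..m}. N_count 3 j E s t < N_count 3 j (insert {t,w} ?C) s t"
    by (rule move_g_lt[OF tt m kk twE gprop inj F0 F0P F0n]) auto
  show ?thesis using part1 part2 by blast
qed



lemma P3_I1: "{s,t} \<in> F \<Longrightarrow> P3 s t F"
  unfolding P3_def by blast

lemma P3_I3: "a \<noteq> s \<Longrightarrow> a \<noteq> t \<Longrightarrow> b \<noteq> s \<Longrightarrow> b \<noteq> t \<Longrightarrow> a \<noteq> b \<Longrightarrow> {s,a} \<in> F \<Longrightarrow> {a,b} \<in> F \<Longrightarrow> {b,t} \<in> F \<Longrightarrow> P3 s t F"
  unfolding P3_def by blast

lemma P3_single: "s \<noteq> t \<Longrightarrow> P3 s t {e} \<Longrightarrow> e = {s,t}"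
  unfolding P3_def by (auto simp: doubleton_eq_iff)

lemma combine:
  assumes "\<forall>i. N_count 3 i E s t \<le> N_count 3 i E1 s1 t1"
    and "\<exists>j\<in>{1..m}. N_count 3 j E s t < N_count 3 j E1 s1 t1"
    and "\<forall>i. N_count 3 i E1 s1 t1 \<le> N_count 3 i E2 s2 t2"
  shows "d_stronger 3 m E2 s2 t2 E s t"
proof -
  have a: "N_count 3 i E s t \<le> N_count 3 i E2 s2 t2" for i
    using spec[OF assms(1), of i] spec[OF assms(3), of i] by linarith
  obtain j where j: "j \<in> {1..m}" "N_count 3 j E s t < N_count 3 j E1 s1 t1" using assms(2) by blast
  have "N_count 3 j E s t < N_count 3 j E2 s2 t2" using j(2) spec[OF assms(3), of j] by linarith
  thus ?thesis unfolding d_stronger_def using a j(1) by blast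
qed

lemma card4: "card {a,b,c,d} \<le> 4"
  by (simp add: card_insert_if)



lemma Sstep:
  assumes tt: "two_terminal_graph n m E s t" and n: "n \<ge> 5" and m: "m \<ge> 5"
    and st: "{s,t} \<in> E" and sw: "{s,w} \<in> E" and tw: "{t,w} \<notin> E" and ws: "w \<noteq> s" and wt: "w \<noteq> t"
  shows "\<exists>E'. two_terminal_graph n m E' s t \<and> {s,t} \<in> E' \<and> (\<forall>i. N_count 3 i E s t \<le> N_count 3 i E' s t)
           \<and> (\<exists>j\<in>{1..m}. N_count 3 j E s t < N_count 3 j E' s t)"
proof -
  have sn: "s \<noteq> t" and sl: "s < n" and tl: "t < n" and cE: "card E = m"
    using tt unfolding two_terminal_graph_def by auto
  have m1: "m \<ge> 1" using m by simp
  have wl: "w < n" using tt_edge[OF tt sw] by simp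
  have wt': "{w,t} \<notin> E" using tw by (simp add: insert_commute)
  show ?thesis
  proof (cases "\<exists>b. b \<noteq> s \<and> b \<noteq> t \<and> b \<noteq> w \<and> {w,b} \<in> E")
    case True
    then obtain b where b: "b \<noteq> s" "b \<noteq> t" "b \<noteq> w" "{w,b} \<in> E" by blast
    let ?E' = "insert {w,t} (E - {{w,b}})"
    have tt': "two_terminal_graph n m ?E' s t"
      by (rule tt_swap[OF tt m1 b(4) wt' wt wl tl])
    have imp: "P3 s t (insert {w,t} F)" if F: "F \<subseteq> E - {{w,b}}" "P3 s t (insert {w,b} F)" for F
    proof -
      have "{t,w} \<notin> F" using F(1) tw by blast
      thus ?thesis using R1_path[OF ws wt b(1,2) b(3)[symmetric] sn _ F(2)] by simp
    qed
    have N: "\<forall>i. N_count 3 i E s t \<le> N_count 3 i ?E' s t"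
      by (rule move_id[OF tt m1 b(4) wt' imp])
    have F0: "{{s,w}} \<subseteq> E - {{w,b}}" using sw ws b by (auto simp: doubleton_eq_iff)
    have F0P: "P3 s t (insert {w,t} {{s,w}})" by (rule P3_I2[OF ws wt]) auto
    have F0n: "\<not> P3 s t (insert {w,b} {{s,w}})"
      using ws wt b sn unfolding P3_def by (auto simp: doubleton_eq_iff)
    have S: "\<exists>j\<in>{1..m}. N_count 3 j E s t < N_count 3 j ?E' s t"
      by (rule move_id_lt[OF tt m1 b(4) wt' imp F0 F0P F0n])
    have st': "{s,t} \<in> ?E'" using st b by (auto simp: doubleton_eq_iff)
    show ?thesis using tt' st' N S by blast
  next
    case False
    have noint: "\<forall>b. b \<noteq> s \<longrightarrow> b \<noteq> t \<longrightarrow> b \<noteq> w \<longrightarrow> {w,b} \<notin> E" using False by blast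
    have irr: "P3 s t F" if F: "F \<subseteq> E - {{s,w}}" "P3 s t (insert {s,w} F)" for F
      by (rule irr_sw[OF ws wt sn _ _ F(2)]) (use F(1) tw noint in auto)
    have mv: "P3 s t (insert f F)" if F: "F \<subseteq> E - {{s,w}}" "P3 s t (insert {s,w} F)" for F f
      by (rule P3_mono[OF _ irr[OF F]]) auto
    show ?thesis
    proof (cases "\<exists>u. u \<in> Dset n E s t \<and> u \<noteq> w")
      case True
      then obtain u where u: "u \<in> Dset n E s t" "u \<noteq> w" by blast
      have us: "u \<noteq> s" and ut: "u \<noteq> t" and ul: "u < n" and ux: "\<not> ({s,u} \<in> E \<longleftrightarrow> {t,u} \<in> E)"
        using u(1) unfolding Dset_def by auto
      show ?thesis
      proof (cases "{s,u} \<in> E")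
        case True
        have tu: "{t,u} \<notin> E" using True ux by blast
        let ?E' = "insert {t,u} (E - {{s,w}})"
        have tt': "two_terminal_graph n m ?E' s t"
          by (rule tt_swap[OF tt m1 sw tu ut[symmetric] tl ul])
        have N: "\<forall>i. N_count 3 i E s t \<le> N_count 3 i ?E' s t"
          by (rule move_id[OF tt m1 sw tu mv])
        have F0: "{{s,u}} \<subseteq> E - {{s,w}}" using True u(2) by (auto simp: doubleton_eq_iff)
        have F0P: "P3 s t (insert {t,u} {{s,u}})" by (rule P3_I2[OF us ut]) (auto simp: insert_commute)
        have F0n: "\<not> P3 s t (insert {s,w} {{s,u}})"
          using ws wt us ut sn u(2) wt[symmetric] ws[symmetric] unfolding P3_def by (auto simp: doubleton_eq_iff)
        have S: "\<exists>j\<in>{1..m}. N_count 3 j E s t < N_count 3 j ?E' s t"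
          by (rule move_id_lt[OF tt m1 sw tu mv F0 F0P F0n])
        have st': "{s,t} \<in> ?E'" using st wt by (auto simp: doubleton_eq_iff)
        show ?thesis using tt' st' N S by blast
      next
        case False
        have tu: "{t,u} \<in> E" and su: "{s,u} \<notin> E" using False ux by blast+
        let ?E' = "insert {s,u} (E - {{s,w}})"
        have tt': "two_terminal_graph n m ?E' s t"
          by (rule tt_swap[OF tt m1 sw su us[symmetric] sl ul])
        have N: "\<forall>i. N_count 3 i E s t \<le> N_count 3 i ?E' s t"
          by (rule move_id[OF tt m1 sw su mv])
        have F0: "{{t,u}} \<subseteq> E - {{s,w}}" using tu sn wt by (auto simp: doubleton_eq_iff)
        have F0P: "P3 s t (insert {s,u} {{t,u}})" by (rule P3_I2[OF us ut]) (auto simp: insert_commute)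
        have F0n: "\<not> P3 s t (insert {s,w} {{t,u}})"
          using ws wt us ut sn u(2) unfolding P3_def by (auto simp: doubleton_eq_iff)
        have S: "\<exists>j\<in>{1..m}. N_count 3 j E s t < N_count 3 j ?E' s t"
          by (rule move_id_lt[OF tt m1 sw su mv F0 F0P F0n])
        have st': "{s,t} \<in> ?E'" using st wt by (auto simp: doubleton_eq_iff)
        show ?thesis using tt' st' N S by blast
      qed
    next
      case False
      have D1: "{s,v} \<in> E \<longleftrightarrow> {t,v} \<in> E" if "v < n" "v \<noteq> s" "v \<noteq> t" "v \<noteq> w" for v
        using False that unfolding Dset_def by blast
      show ?thesis
      proof (cases "\<exists>x y. x \<noteq> s \<and> x \<noteq> t \<and> y \<noteq> s \<and> y \<noteq> t \<and> x \<noteq> y \<and> x \<noteq> w \<and> {s,x} \<in> E \<and> {t,y} \<in> E \<and> {x,y} \<notin> E")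
        case True
        then obtain x y where xy: "x \<noteq> s" "x \<noteq> t" "y \<noteq> s" "y \<noteq> t" "x \<noteq> y" "x \<noteq> w" "{s,x} \<in> E" "{t,y} \<in> E" "{x,y} \<notin> E"
          by blast
        have yw: "y \<noteq> w" using xy(8) tw by blast
        have xl: "x < n" using tt_edge[OF tt xy(7)] by simp
        have yl: "y < n" using tt_edge[OF tt xy(8)] by simp
        let ?E' = "insert {x,y} (E - {{s,w}})"
        have tt': "two_terminal_graph n m ?E' s t"
          by (rule tt_swap[OF tt m1 sw xy(9) xy(5) xl yl])
        have N: "\<forall>i. N_count 3 i E s t \<le> N_count 3 i ?E' s t"
          by (rule move_id[OF tt m1 sw xy(9) mv])
        have F0: "{{s,x},{t,y}} \<subseteq> E - {{s,w}}" using xy sn by (auto simp: doubleton_eq_iff)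
        have F0P: "P3 s t (insert {x,y} {{s,x},{t,y}})"
          by (rule P3_I3[OF xy(1-5)]) (auto simp: insert_commute)
        have F0n: "\<not> P3 s t (insert {s,w} {{s,x},{t,y}})"
          using ws wt xy(1-6) yw sn unfolding P3_def by (auto simp: doubleton_eq_iff)
        have S: "\<exists>j\<in>{1..m}. N_count 3 j E s t < N_count 3 j ?E' s t"
          by (rule move_id_lt[OF tt m1 sw xy(9) mv F0 F0P F0n])
        have st': "{s,t} \<in> ?E'" using st wt by (auto simp: doubleton_eq_iff)
        show ?thesis using tt' st' N S by blast
      next
        case notA: False
        show ?thesis
        proof (cases "\<exists>x y. x \<noteq> s \<and> x \<noteq> t \<and> y \<noteq> s \<and> y \<noteq> t \<and> {x,y} \<in> E \<and> {s,x} \<notin> E \<and> {t,x} \<notin> E")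
          case True
          then obtain x y where xy: "x \<noteq> s" "x \<noteq> t" "y \<noteq> s" "y \<noteq> t" "{x,y} \<in> E" "{s,x} \<notin> E" "{t,x} \<notin> E"
            by blast
          let ?E' = "insert {t,w} (E - {{x,y}})"
          have tt': "two_terminal_graph n m ?E' s t"
            by (rule tt_swap[OF tt m1 xy(5) tw wt[symmetric] tl wl])
          have imp: "P3 s t (insert {t,w} F)" if F: "F \<subseteq> E - {{x,y}}" "P3 s t (insert {x,y} F)" for F
          proof -
            have "P3 s t F" by (rule irr_int[OF xy(1-4) _ _ F(2)]) (use F(1) xy(6,7) in auto)
            thus ?thesis by (rule P3_mono[rotated]) auto
          qed
          have N: "\<forall>i. N_count 3 i E s t \<le> N_count 3 i ?E' s t"
            by (rule move_id[OF tt m1 xy(5) tw imp])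
          have F0: "{{s,w}} \<subseteq> E - {{x,y}}" using sw xy(1,3) by (auto simp: doubleton_eq_iff)
          have F0P: "P3 s t (insert {t,w} {{s,w}})" by (rule P3_I2[OF ws wt]) (auto simp: insert_commute)
          have F0n: "\<not> P3 s t (insert {x,y} {{s,w}})"
            using ws wt xy(1-4) sn unfolding P3_def by (auto simp: doubleton_eq_iff)
          have S: "\<exists>j\<in>{1..m}. N_count 3 j E s t < N_count 3 j ?E' s t"
            by (rule move_id_lt[OF tt m1 xy(5) tw imp F0 F0P F0n])
          have st': "{s,t} \<in> ?E'" using st xy(1,2) by (auto simp: doubleton_eq_iff)
          show ?thesis using tt' st' N S by blast
        next
          case notB: False
          have "\<exists>k1 k2. k1 \<noteq> k2 \<and> k1 \<noteq> s \<and> k2 \<noteq> s \<and> {t,k1} \<in> E \<and> {t,k2} \<in> E"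
          proof (rule ccontr)
            assume nk: "\<not> ?thesis"
            obtain k where k: "\<And>v. v \<noteq> s \<Longrightarrow> {t,v} \<in> E \<Longrightarrow> v = k"
            proof (cases "\<exists>v. v \<noteq> s \<and> {t,v} \<in> E")
              case True
              then obtain k where "k \<noteq> s" "{t,k} \<in> E" by blast
              thus ?thesis using that nk by blast
            next
              case False thus ?thesis using that by blast
            qed
            have keyS: "v = k" if "v \<noteq> s" "v \<noteq> t" "v \<noteq> w" "{s,v} \<in> E" for v
            proof -
              have "v < n" using tt_edge[OF tt that(4)] by simp
              hence "{t,v} \<in> E" using D1[OF _ that(1-3)] that(4) by blast
              thus ?thesis using k that(1) by blast
            qed
            have int: "u = k" if "u \<noteq> s" "u \<noteq> t" "v \<noteq> s" "v \<noteq> t" "{u,v} \<in> E" for u v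
            proof -
              have uv: "u \<noteq> v" using tt_edge[OF tt that(5)] by simp
              have uw: "u \<noteq> w"
              proof
                assume "u = w"
                thus False using noint that(3,4,5) uv by blast
              qed
              have "{s,u} \<in> E \<or> {t,u} \<in> E" using notB that by blast
              thus ?thesis using keyS[OF that(1,2) uw] k that(1) by blast
            qed
            have sub: "E \<subseteq> {{s,t},{s,w},{s,k},{t,k}}"
            proof
              fix e assume e: "e \<in> E"
              then obtain u v where uv: "e = {u,v}" "u \<noteq> v"
                using tt unfolding two_terminal_graph_def by blast
              have sym: "{v,u} \<in> E" using e uv(1) by (simp add: insert_commute)
              have eu: "{u,v} \<in> E" using e uv(1) by simp
              have c1: "{a,b} \<in> {{s,t},{s,w},{s,k},{t,k}}" if "{a,b} \<in> E" "a = s \<or> a = t" "a \<noteq> b" for a b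
              proof (cases "a = s")
                case True
                show ?thesis
                proof (cases "b = t")
                  case True thus ?thesis using \<open>a = s\<close> by simp
                next
                  case False
                  show ?thesis
                  proof (cases "b = w")
                    case True thus ?thesis using \<open>a = s\<close> by simp
                  next
                    case False
                    have "b = k" using keyS[of b] \<open>b \<noteq> t\<close> False that(1,3) \<open>a = s\<close> by blast
                    thus ?thesis using \<open>a = s\<close> by simp
                  qed
                qed
              next
                case False
                hence at: "a = t" using that(2) by blast
                show ?thesis
                proof (cases "b = s")
                  case True thus ?thesis using at by (simp add: insert_commute)
                next
                  case False
                  have "b = k" using k[of b] False that(1) at by blast
                  thus ?thesis using at by simp
                qed
              qed
              show "e \<in> {{s,t},{s,w},{s,k},{t,k}}"
              proof (cases "u = s \<or> u = t")
                case True thus ?thesis using c1[OF eu True uv(2)] uv(1) by simp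
              next
                case Fu: False
                show ?thesis
                proof (cases "v = s \<or> v = t")
                  case True
                  have "{v,u} \<in> {{s,t},{s,w},{s,k},{t,k}}" using c1[OF sym True] uv(2) by blast
                  thus ?thesis using uv(1) by (simp add: insert_commute)
                next
                  case Fv: False
                  have "u = k" using int[of u v] Fu Fv eu by blast
                  moreover have "v = k" using int[of v u] Fu Fv sym by blast
                  ultimately show ?thesis using uv(2) by simp
                qed
              qed
            qed
            have "card E \<le> card {{s,t},{s,w},{s,k},{t,k}}" by (rule card_mono[OF _ sub]) simp
            also have "\<dots> \<le> 4" by (rule card4)
            finally show False using cE m by simp
          qed
          then obtain k1 k2 where kk: "k1 \<noteq> k2" "k1 \<noteq> s" "k2 \<noteq> s" "{t,k1} \<in> E" "{t,k2} \<in> E" by blast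
          have k1t: "k1 \<noteq> t" using tt_edge[OF tt kk(4)] by simp
          have k2t: "k2 \<noteq> t" using tt_edge[OF tt kk(5)] by simp
          have k1l: "k1 < n" using tt_edge[OF tt kk(4)] by simp
          have k2l: "k2 < n" using tt_edge[OF tt kk(5)] by simp
          have k1w: "k1 \<noteq> w" using kk(4) tw by blast
          have k2w: "k2 \<noteq> w" using kk(5) tw by blast
          have sk1: "{s,k1} \<in> E" using D1[OF k1l kk(2) k1t k1w] kk(4) by blast
          have k12: "{k1,k2} \<in> E" using notA kk(1,2,3) k1t k2t k1w sk1 kk(5) by blast
          let ?E' = "insert {t,w} (E - {{k1,k2}})"
          have tt': "two_terminal_graph n m ?E' s t"
            by (rule tt_swap[OF tt m1 k12 tw wt[symmetric] tl wl])
          have SM: "(\<forall>i. N_count 3 i E s t \<le> N_count 3 i ?E' s t) \<and>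
               (\<exists>j\<in>{1..m}. N_count 3 j E s t < N_count 3 j ?E' s t)"
            by (rule special_move[OF tt m1 sn kk(1) kk(2) k1t kk(3) k2t ws wt k1w[symmetric] k2w[symmetric] k12 sw tw noint])
          have st': "{s,t} \<in> ?E'" using st kk(2,3) by (auto simp: doubleton_eq_iff)
          show ?thesis using tt' st' SM by blast
        qed
      qed
    qed
  qed
qed



theorem lemma8:
  fixes n m :: nat and E :: "nat set set" and s t :: nat
  assumes "n \<ge> 5" and "m \<ge> 5"
    and "two_terminal_graph n m E s t"
    and "\<not> true_twins E s t"
  shows "\<exists>E' s' t'. two_terminal_graph n m E' s' t' \<and> true_twins E' s' t' \<and>
           d_stronger 3 m E' s' t' E s t"
proof -
  note tt = assms(3)
  have sn: "s \<noteq> t" and sl: "s < n" and tl: "t < n" and cE: "card E = m"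
    using tt unfolding two_terminal_graph_def by auto
  have m1: "m \<ge> 1" using assms(2) by simp
  have step1: "\<exists>E1. two_terminal_graph n m E1 s t \<and> {s,t} \<in> E1 \<and> (\<forall>i. N_count 3 i E s t \<le> N_count 3 i E1 s t)
           \<and> (\<exists>j\<in>{1..m}. N_count 3 j E s t < N_count 3 j E1 s t)"
  proof (cases "{s,t} \<in> E")
    case False
    have "E \<noteq> {}" using cE assms(2) by auto
    then obtain e where e: "e \<in> E" by blast
    let ?E1 = "insert {s,t} (E - {e})"
    have tt1: "two_terminal_graph n m ?E1 s t" by (rule tt_swap[OF tt m1 e False sn sl tl])
    have imp: "P3 s t (insert {s,t} F)" for F by (rule P3_I1) simp
    have N: "\<forall>i. N_count 3 i E s t \<le> N_count 3 i ?E1 s t" by (rule move_id[OF tt m1 e False imp])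
    have F0n: "\<not> P3 s t (insert e {})"
    proof
      assume "P3 s t (insert e {})"
      hence "e = {s,t}" using P3_single[OF sn] by simp
      thus False using e False by simp
    qed
    have S: "\<exists>j\<in>{1..m}. N_count 3 j E s t < N_count 3 j ?E1 s t"
      by (rule move_id_lt[OF tt m1 e False imp _ imp F0n]) simp
    show ?thesis using tt1 N S by blast
  next
    case True
    have "Dset n E s t \<noteq> {}" using twins_D[OF tt True] assms(4) by blast
    then obtain w where w: "w \<in> Dset n E s t" by blast
    have ws: "w \<noteq> s" and wt: "w \<noteq> t" and x: "\<not> ({s,w} \<in> E \<longleftrightarrow> {t,w} \<in> E)"
      using w unfolding Dset_def by auto
    show ?thesis
    proof (cases "{s,w} \<in> E")
      case sw: True
      have tw: "{t,w} \<notin> E" using sw x by blast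
      show ?thesis by (rule Sstep[OF tt assms(1,2) True sw tw ws wt])
    next
      case sw: False
      have tw: "{t,w} \<in> E" using sw x by blast
      have ts: "{t,s} \<in> E" using True by (simp add: insert_commute)
      obtain E1 where E1: "two_terminal_graph n m E1 t s" "{t,s} \<in> E1"
        "\<forall>i. N_count 3 i E t s \<le> N_count 3 i E1 t s"
        "\<exists>j\<in>{1..m}. N_count 3 j E t s < N_count 3 j E1 t s"
        using Sstep[OF tt_sym[OF tt] assms(1,2) ts tw sw wt ws] by blast
      have a: "two_terminal_graph n m E1 s t" using tt_sym[OF E1(1)] .
      have b: "{s,t} \<in> E1" using E1(2) by (simp add: insert_commute)
      have c: "\<forall>i. N_count 3 i E s t \<le> N_count 3 i E1 s t" using E1(3) N_sym[OF sn] by simp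
      have d: "\<exists>j\<in>{1..m}. N_count 3 j E s t < N_count 3 j E1 s t" using E1(4) N_sym[OF sn] by simp
      show ?thesis using a b c d by blast
    qed
  qed
  then obtain E1 where E1: "two_terminal_graph n m E1 s t" "{s,t} \<in> E1"
    "\<forall>i. N_count 3 i E s t \<le> N_count 3 i E1 s t"
    "\<exists>j\<in>{1..m}. N_count 3 j E s t < N_count 3 j E1 s t" by blast
  obtain E2 s2 t2 where E2: "two_terminal_graph n m E2 s2 t2" "true_twins E2 s2 t2"
    "\<forall>i. N_count 3 i E1 s t \<le> N_count 3 i E2 s2 t2"
    using Rmain[OF assms(1) m1 E1(1,2) refl] by blast
  have "d_stronger 3 m E2 s2 t2 E s t" by (rule combine[OF E1(3,4) E2(3)])
  thus ?thesis using E2(1,2) by blast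
qed


end
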